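(* On $\mathcal A_{\mathcal G}$ the metrics $\mathrm a_{\mathcal G}$ and $\mathrm d_{\mathcal G}$ induce the same topology.
   Context: $(X,\Sigma,\mu)$ is a separable Lebesgue space with a non-atomic probability measure $\mu$. $\mathcal A$ is the group of invertible measure-preserving transformations of $X$, two transformations being identified if they agree outside a null set. Fix a countable family $\{A_i\}_{i\in\mathbb N}\subset\Sigma$ that generates $\Sigma$ and is dense in $\Sigma$ (for every $A\in\Sigma$ and $\varepsilon>0$ there is $i$ with $\mu(A_i\triangle A)<\varepsilon$). For $T,S\in\mathcal A$ put $\mathrm d(T,S)=\sum_{i}2^{-i}\big(\mu(TA_i\triangle SA_i)+\mu(T^{-1}A_i\triangle S^{-1}A_i)\big)$ and $\mathrm a(T,S)=\sum_{i,j}2^{-(i+j)}|\mu(TA_i\cap A_j)-\mu(SA_i\cap A_j)|$. $\mathcal G$ is a Hausdorff locally compact group with a countable neighborhood base. Fix an at most countable family $\{K_i\}$ of compact subsets of $\mathcal G$ with nonempty interiors whose union contains a set generating $\mathcal G$. An action of $\mathcal G$ is a family $T=\{T^g\}_{g\in\mathcal G}\subset\mathcal A$ with $T^gT^h=T^{gh}$ for all $g,h$ and such that $g\mapsto\mu(T^gA\cap B)$ is continuous for all $A,B\in\Sigma$. $\mathcal A_{\mathcal G}$ is the set of all actions; for $T,S\in\mathcal A_{\mathcal G}$, $\mathrm d_{\mathcal G}(T,S)=\sum_i 2^{-i}\sup_{g\in K_i}\mathrm d(T^g,S^g)$ and $\mathrm a_{\mathcal G}(T,S)=\sum_i 2^{-i}\sup_{g\in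 K_i}\mathrm a(T^g,S^g)$. *)

theory Defs
  imports "HOL-Analysis.Analysis" "HOL-Probability.Probability"
begin

definition nonatomic_lebesgue_space :: "'a measure \<Rightarrow> bool" where
  "nonatomic_lebesgue_space M \<longleftrightarrow> prob_space M \<and>
     (\<exists>N \<in> null_sets M. \<exists>N' \<in> null_sets (lebesgue_on {0..1::real}). \<exists>f.
        bij_betw f (space M - N) ({0..1} - N') \<and>
        (\<forall>A. A \<subseteq> space M - N \<longrightarrow> (A \<in> sets M \<longleftrightarrow> f ` A \<in> sets (lebesgue_on {0..1}))) \<and>
        (\<forall>A \<in> sets M. A \<subseteq> space M - N \<longrightarrow> measure M A = measure lebesgue (f ` A)))"

text \<open>Invertible measure-preserving transformations (representatives; classes are taken mod 0).\<close>
definition inv_mpt :: "'a measure \<Rightarrow> ('a \<Rightarrow> 'a) \<Rightarrow> bool" where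
  "inv_mpt M T \<longleftrightarrow> bij_betw T (space M) (space M) \<and> T \<in> measurable M M \<and>
     inv_into (space M) T \<in> measurable M M \<and> distr M M T = M"

definition dist_d :: "'a measure \<Rightarrow> (nat \<Rightarrow> 'a set) \<Rightarrow> ('a \<Rightarrow> 'a) \<Rightarrow> ('a \<Rightarrow> 'a) \<Rightarrow> real" where
  "dist_d M A T S = (\<Sum>i. (1/2)^i *
      (measure M ((T ` A i) \<union> (S ` A i) - (T ` A i) \<inter> (S ` A i)) +
       measure M ((T -` A i \<inter> space M) \<union> (S -` A i \<inter> space M)
                 - (T -` A i \<inter> space M) \<inter> (S -` A i \<inter> space M))))"

definition dist_a :: "'a measure \<Rightarrow> (nat \<Rightarrow> 'a set) \<Rightarrow> ('a \<Rightarrow> 'a) \<Rightarrow> ('a \<Rightarrow> 'a) \<Rightarrow> real" where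
  "dist_a M A T S = (\<Sum>i. \<Sum>j. (1/2)^(i+j) *
      \<bar>measure M (T ` A i \<inter> A j) - measure M (S ` A i \<inter> A j)\<bar>)"

definition generated_subgroup :: "'g::group_add set \<Rightarrow> 'g set" where
  "generated_subgroup S = \<Inter>{H. S \<subseteq> H \<and> 0 \<in> H \<and> (\<forall>x\<in>H. \<forall>y\<in>H. x + y \<in> H) \<and> (\<forall>x\<in>H. - x \<in> H)}"

definition is_action :: "'a measure \<Rightarrow> ('g::topological_group_add \<Rightarrow> 'a \<Rightarrow> 'a) \<Rightarrow> bool" where
  "is_action M T \<longleftrightarrow> (\<forall>g. inv_mpt M (T g)) \<and>
     (\<forall>g h. AE x in M. T g (T h x) = T (g + h) x) \<and>
     (\<forall>A\<in>sets M. \<forall>B\<in>sets M. continuous_on UNIV (\<lambda>g. measure M (T g ` A \<inter> B)))"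

definition dist_dG :: "'a measure \<Rightarrow> (nat \<Rightarrow> 'a set) \<Rightarrow> nat set \<Rightarrow> (nat \<Rightarrow> 'g set)
    \<Rightarrow> ('g \<Rightarrow> 'a \<Rightarrow> 'a) \<Rightarrow> ('g \<Rightarrow> 'a \<Rightarrow> 'a) \<Rightarrow> real" where
  "dist_dG M A I K T S = (\<Sum>i. if i \<in> I then (1/2)^i * (SUP g\<in>K i. dist_d M A (T g) (S g)) else 0)"

definition dist_aG :: "'a measure \<Rightarrow> (nat \<Rightarrow> 'a set) \<Rightarrow> nat set \<Rightarrow> (nat \<Rightarrow> 'g set)
    \<Rightarrow> ('g \<Rightarrow> 'a \<Rightarrow> 'a) \<Rightarrow> ('g \<Rightarrow> 'a \<Rightarrow> 'a) \<Rightarrow> real" where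
  "dist_aG M A I K T S = (\<Sum>i. if i \<in> I then (1/2)^i * (SUP g\<in>K i. dist_a M A (T g) (S g)) else 0)"

definition pm_open :: "'b set \<Rightarrow> ('b \<Rightarrow> 'b \<Rightarrow> real) \<Rightarrow> 'b set \<Rightarrow> bool" where
  "pm_open X \<rho> U \<longleftrightarrow> U \<subseteq> X \<and> (\<forall>x\<in>U. \<exists>e>0. \<forall>y\<in>X. \<rho> x y < e \<longrightarrow> y \<in> U)"

end

theory Submission
  imports Defs
begin


lemma img_sets:
  assumes "inv_mpt M T" "B \<in> sets M"
  shows "T ` B \<in> sets M" "measure M (T ` B) = measure M B"
proof -
  have bij: "bij_betw T (space M) (space M)" and Tm: "T \<in> measurable M M"
    and im: "inv_into (space M) T \<in> measurable M M" and d: "distr M M T = M"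
    using assms(1) unfolding inv_mpt_def by auto
  have Bs: "B \<subseteq> space M" using sets.sets_into_space assms(2) by auto
  have eq: "T ` B = inv_into (space M) T -` B \<inter> space M"
  proof
    show "T ` B \<subseteq> inv_into (space M) T -` B \<inter> space M"
      using bij Bs by (auto simp: bij_betw_def inv_into_f_f)
    show "inv_into (space M) T -` B \<inter> space M \<subseteq> T ` B"
    proof
      fix x assume x: "x \<in> inv_into (space M) T -` B \<inter> space M"
      then have "x \<in> T ` space M" using bij by (auto simp: bij_betw_def)
      then have "x = T (inv_into (space M) T x)" by (simp add: f_inv_into_f)
      then show "x \<in> T ` B" using x by blast
    qed
  qed
  show 1: "T ` B \<in> sets M" unfolding eq using im assms(2) by (rule measurable_sets)
  have "T -` (T ` B) \<inter> space M = B"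
    using bij Bs by (auto simp: bij_betw_def inj_on_def)
  moreover have "measure (distr M M T) (T ` B) = measure M (T -` (T ` B) \<inter> space M)"
    using Tm 1 by (rule measure_distr)
  ultimately show "measure M (T ` B) = measure M B" using d by simp
qed

lemma pre_sets:
  assumes "inv_mpt M T" "B \<in> sets M"
  shows "T -` B \<inter> space M \<in> sets M" "measure M (T -` B \<inter> space M) = measure M B"
proof -
  have Tm: "T \<in> measurable M M" and d: "distr M M T = M"
    using assms(1) unfolding inv_mpt_def by auto
  show "T -` B \<inter> space M \<in> sets M" using Tm assms(2) by (rule measurable_sets)
  have "measure (distr M M T) B = measure M (T -` B \<inter> space M)"
    using Tm assms(2) by (rule measure_distr)
  then show "measure M (T -` B \<inter> space M) = measure M B" using d by simp
qed

lemma pre_int: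
  assumes "inv_mpt M T" "B \<in> sets M" "C \<in> sets M"
  shows "measure M ((T -` B \<inter> space M) \<inter> C) = measure M (T ` C \<inter> B)"
proof -
  have Cs: "C \<subseteq> space M" using sets.sets_into_space assms(3) by auto
  have "T ` ((T -` B \<inter> space M) \<inter> C) = T ` C \<inter> B" using Cs by auto
  moreover have "(T -` B \<inter> space M) \<inter> C \<in> sets M"
    using pre_sets(1)[OF assms(1,2)] assms(3) by auto
  ultimately show ?thesis using img_sets(2)[OF assms(1)] by metis
qed

lemma symdiff_meas:
  assumes "finite_measure M" "P \<in> sets M" "Q \<in> sets M"
  shows "measure M (P \<union> Q - P \<inter> Q) = measure M P + measure M Q - 2 * measure M (P \<inter> Q)"
proof -
  interpret finite_measure M by fact
  have "P \<union> Q - P \<inter> Q = (P - Q) \<union> (Q - P)" by auto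
  then have "measure M (P \<union> Q - P \<inter> Q) = measure M (P - Q) + measure M (Q - P)"
    using assms by (metis finite_measure_Union sets.Diff Diff_Int_distrib2 Diff_disjoint Int_Diff Int_empty_left)
  moreover have "measure M (P - Q) = measure M P - measure M (P \<inter> Q)"
    using assms by (metis finite_measure_Diff' )
  moreover have "measure M (Q - P) = measure M Q - measure M (P \<inter> Q)"
    using assms by (metis finite_measure_Diff' inf_commute)
  ultimately show ?thesis by simp
qed

lemma int_diff:
  assumes "finite_measure M" "P \<in> sets M" "Q \<in> sets M" "R \<in> sets M"
  shows "\<bar>measure M (P \<inter> R) - measure M (Q \<inter> R)\<bar> \<le> measure M (P \<union> Q - P \<inter> Q)"
proof -
  interpret finite_measure M by fact
  have a: "measure M (P \<inter> R) \<le> measure M (Q \<inter> R) + measure M (P \<union> Q - P \<inter> Q)"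
  proof -
    have "measure M (P \<inter> R) \<le> measure M ((Q \<inter> R) \<union> (P \<union> Q - P \<inter> Q))"
      using assms by (intro finite_measure_mono) auto
    also have "\<dots> \<le> measure M (Q \<inter> R) + measure M (P \<union> Q - P \<inter> Q)"
      using assms by (intro measure_subadditive) (auto simp: fmeasurable_def)
    finally show ?thesis .
  qed
  have b: "measure M (Q \<inter> R) \<le> measure M (P \<inter> R) + measure M (P \<union> Q - P \<inter> Q)"
  proof -
    have "measure M (Q \<inter> R) \<le> measure M ((P \<inter> R) \<union> (P \<union> Q - P \<inter> Q))"
      using assms by (intro finite_measure_mono) auto
    also have "\<dots> \<le> measure M (P \<inter> R) + measure M (P \<union> Q - P \<inter> Q)"
      using assms by (intro measure_subadditive) (auto simp: fmeasurable_def)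
    finally show ?thesis .
  qed
  from a b show ?thesis by linarith
qed

lemma core:
  assumes "finite_measure M" "P \<in> sets M" "Q \<in> sets M" "C \<in> sets M"
    "measure M P = measure M Q"
  shows "measure M (P \<union> Q - P \<inter> Q) \<le> 4 * measure M ((C - P) \<union> (P - C))
           + 2 * \<bar>measure M (P \<inter> C) - measure M (Q \<inter> C)\<bar>"
proof -
  have e: "(C - P) \<union> (P - C) = P \<union> C - P \<inter> C" by auto
  have 1: "\<bar>measure M (P \<inter> Q) - measure M (C \<inter> Q)\<bar> \<le> measure M (P \<union> C - P \<inter> C)"
    using int_diff[OF assms(1,2,4,3)] .
  have 2: "\<bar>measure M (C \<inter> P) - measure M (P \<inter> P)\<bar> \<le> measure M (P \<union> C - P \<inter> C)"
    using int_diff[OF assms(1,4,2,2)] by (simp add: Un_commute Int_commute)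
  have 3: "measure M (C \<inter> Q) = measure M (Q \<inter> C)" "measure M (C \<inter> P) = measure M (P \<inter> C)"
    by (simp_all add: Int_commute)
  show ?thesis unfolding e symdiff_meas[OF assms(1,2,3)] using 1 2 3 assms(5) abs_ge_self[of "measure M (P \<inter> C) - measure M (Q \<inter> C)"] by (simp add: abs_le_iff)
qed



lemma tail_bound:
  fixes f :: "nat \<Rightarrow> real"
  assumes f0: "\<And>k. 0 \<le> f k" and fc: "\<And>k. f k \<le> c" and fe: "\<And>k. k < N \<Longrightarrow> f k \<le> \<eta>"
    and e0: "0 \<le> \<eta>"
  shows "summable (\<lambda>k. (1/2::real)^k * f k)" "(\<Sum>k. (1/2::real)^k * f k) \<le> 2*\<eta> + 2*c*(1/2)^N"
proof -
  have c0: "0 \<le> c" using f0 fc order_trans by blast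
  have g: "summable (\<lambda>k. (1/2::real)^k)" by (rule summable_geometric) simp
  show s: "summable (\<lambda>k. (1/2::real)^k * f k)"
    by (rule summable_comparison_test[where g="\<lambda>k. c * (1/2)^k"])
       (use f0 fc in \<open>auto intro!: exI[of _ 0] mult_right_mono simp: mult.commute summable_mult g\<close>)
  have split: "(\<Sum>k. (1/2::real)^k * f k) = (\<Sum>n. (1/2)^(n+N) * f (n+N)) + (\<Sum>i<N. (1/2)^i * f i)"
    using suminf_split_initial_segment[OF s, of N] by simp
  have gs: "(\<Sum>n. (1/2::real)^n) = 2" using suminf_geometric[of "1/2::real"] by simp
  have tail: "(\<Sum>n. (1/2::real)^(n+N) * f (n+N)) \<le> 2*c*(1/2)^N"
  proof -
    have "(\<Sum>n. (1/2::real)^(n+N) * f (n+N)) \<le> (\<Sum>n. (c*(1/2)^N) * (1/2)^n)"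
    proof (rule suminf_le)
      show "summable (\<lambda>n. (1/2::real)^(n+N) * f (n+N))"
        using summable_ignore_initial_segment[OF s, of N] by simp
      show "summable (\<lambda>n. (c*(1/2::real)^N) * (1/2)^n)" using g by (rule summable_mult)
      fix n show "(1/2::real)^(n+N) * f (n+N) \<le> (c*(1/2)^N) * (1/2)^n"
        using fc[of "n+N"] by (simp add: power_add mult_left_mono mult.commute mult.left_commute)
    qed
    also have "\<dots> = c*(1/2)^N * 2" using suminf_mult[OF g, of "c*(1/2)^N"] gs by simp
    finally show ?thesis by simp
  qed
  have head: "(\<Sum>i<N. (1/2::real)^i * f i) \<le> 2*\<eta>"
  proof -
    have "(\<Sum>i<N. (1/2::real)^i * f i) \<le> (\<Sum>i<N. (1/2)^i * \<eta>)"
      by (intro sum_mono mult_left_mono fe) auto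
    also have "\<dots> = \<eta> * (\<Sum>i<N. (1/2::real)^i)" by (simp add: sum_distrib_left mult.commute)
    also have "\<dots> \<le> \<eta> * 2"
    proof (rule mult_left_mono[OF _ e0])
      have "(\<Sum>i<N. (1/2::real)^i) \<le> (\<Sum>n. (1/2::real)^n)"
        by (rule sum_le_suminf[OF g]) auto
      then show "(\<Sum>i<N. (1/2::real)^i) \<le> 2" using gs by simp
    qed
    finally show ?thesis by simp
  qed
  show "(\<Sum>k. (1/2::real)^k * f k) \<le> 2*\<eta> + 2*c*(1/2)^N" using split tail head by simp
qed

lemma suminf_term_le:
  fixes f :: "nat \<Rightarrow> real"
  assumes "summable f" "\<And>k. 0 \<le> f k"
  shows "f n \<le> suminf f"
  using sum_le_suminf[OF assms(1), of "{n}"] assms(2) by simp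



definition dI :: "'a measure \<Rightarrow> (nat \<Rightarrow> 'a set) \<Rightarrow> ('a \<Rightarrow> 'a) \<Rightarrow> ('a \<Rightarrow> 'a) \<Rightarrow> nat \<Rightarrow> real" where
  "dI M A T S i = measure M ((T ` A i) \<union> (S ` A i) - (T ` A i) \<inter> (S ` A i)) +
       measure M ((T -` A i \<inter> space M) \<union> (S -` A i \<inter> space M)
                 - (T -` A i \<inter> space M) \<inter> (S -` A i \<inter> space M))"

definition aT :: "'a measure \<Rightarrow> (nat \<Rightarrow> 'a set) \<Rightarrow> ('a \<Rightarrow> 'a) \<Rightarrow> ('a \<Rightarrow> 'a) \<Rightarrow> nat \<Rightarrow> nat \<Rightarrow> real" where
  "aT M A T S i j = \<bar>measure M (T ` A i \<inter> A j) - measure M (S ` A i \<inter> A j)\<bar>"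

lemma dist_d_eq: "dist_d M A T S = (\<Sum>i. (1/2)^i * dI M A T S i)"
  unfolding dist_d_def dI_def ..

lemma dist_a_eq: "dist_a M A T S = (\<Sum>i. \<Sum>j. (1/2)^(i+j) * aT M A T S i j)"
  unfolding dist_a_def aT_def ..

lemma dI_bounds: assumes "prob_space M" shows "0 \<le> dI M A T S i" "dI M A T S i \<le> 2"
proof -
  interpret prob_space M by fact
  show "0 \<le> dI M A T S i" unfolding dI_def by simp
  show "dI M A T S i \<le> 2" unfolding dI_def using prob_le_1
    by (smt (verit) prob_le_1)
qed

lemma aT_bounds: assumes "prob_space M" shows "0 \<le> aT M A T S i j" "aT M A T S i j \<le> 1"
proof -
  interpret prob_space M by fact
  show "0 \<le> aT M A T S i j" unfolding aT_def by simp
  have "measure M (T ` A i \<inter> A j) \<le> 1" "measure M (S ` A i \<inter> A j) \<le> 1"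
    "0 \<le> measure M (T ` A i \<inter> A j)" "0 \<le> measure M (S ` A i \<inter> A j)"
    by (simp_all add: prob_le_1)
  then show "aT M A T S i j \<le> 1" unfolding aT_def abs_le_iff by linarith
qed

lemma dist_d_bound:
  assumes "prob_space M" "\<And>k. k < N \<Longrightarrow> dI M A T S k \<le> \<eta>" "0 \<le> \<eta>"
  shows "dist_d M A T S \<le> 2*\<eta> + 4*(1/2)^N"
  using tail_bound(2)[of "dI M A T S" 2 N \<eta>] dI_bounds[OF assms(1)] assms(2,3)
  unfolding dist_d_eq by simp

lemma dist_d_bounds:
  assumes "prob_space M" shows "0 \<le> dist_d M A T S" "dist_d M A T S \<le> 4"
proof -
  show "dist_d M A T S \<le> 4" using dist_d_bound[OF assms, of 0 _ _ _ 0] by simp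
  show "0 \<le> dist_d M A T S" unfolding dist_d_eq
    using tail_bound(1)[of "dI M A T S" 2 0 0] dI_bounds[OF assms]
    by (intro suminf_nonneg) auto
qed

lemma aT_inner:
  assumes "prob_space M"
  shows "summable (\<lambda>j. (1/2::real)^(i+j) * aT M A T S i j)"
    "(\<Sum>j. (1/2::real)^(i+j) * aT M A T S i j) = (1/2)^i * (\<Sum>j. (1/2)^j * aT M A T S i j)"
    "(\<Sum>j. (1/2::real)^(i+j) * aT M A T S i j) \<le> (1/2)^i * 2"
    "0 \<le> (\<Sum>j. (1/2::real)^(i+j) * aT M A T S i j)"
proof -
  have s: "summable (\<lambda>j. (1/2::real)^j * aT M A T S i j)" and b: "(\<Sum>j. (1/2::real)^j * aT M A T S i j) \<le> 2"
    using tail_bound[of "aT M A T S i" 1 0 0] aT_bounds[OF assms] by auto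
  have e: "(\<lambda>j. (1/2::real)^(i+j) * aT M A T S i j) = (\<lambda>j. (1/2)^i * ((1/2)^j * aT M A T S i j))"
    by (simp add: power_add mult.assoc)
  show "summable (\<lambda>j. (1/2::real)^(i+j) * aT M A T S i j)" unfolding e using s by (rule summable_mult)
  show eq: "(\<Sum>j. (1/2::real)^(i+j) * aT M A T S i j) = (1/2)^i * (\<Sum>j. (1/2)^j * aT M A T S i j)"
    unfolding e using suminf_mult[OF s] by simp
  show "(\<Sum>j. (1/2::real)^(i+j) * aT M A T S i j) \<le> (1/2)^i * 2" unfolding eq using b
    by (intro mult_left_mono) auto
  have "0 \<le> (\<Sum>j. (1/2::real)^j * aT M A T S i j)" using s aT_bounds[OF assms]
    by (intro suminf_nonneg) auto
  then show "0 \<le> (\<Sum>j. (1/2::real)^(i+j) * aT M A T S i j)" unfolding eq by simp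
qed

lemma dist_a_facts:
  assumes "prob_space M"
  shows "summable (\<lambda>i. \<Sum>j. (1/2::real)^(i+j) * aT M A T S i j)"
    "dist_a M A T S \<le> 4" "0 \<le> dist_a M A T S"
    "(1/2)^(i+j) * aT M A T S i j \<le> dist_a M A T S"
proof -
  let ?F = "\<lambda>i. \<Sum>j. (1/2::real)^(i+j) * aT M A T S i j"
  let ?H = "\<lambda>i. \<Sum>j. (1/2::real)^j * aT M A T S i j"
  have F: "?F = (\<lambda>i. (1/2)^i * ?H i)" using aT_inner(2)[OF assms] by auto
  have H: "0 \<le> ?H i" "?H i \<le> 2" for i
    using tail_bound[of "aT M A T S i" 1 0 0] aT_bounds[OF assms]
    by (auto intro!: suminf_nonneg)
  have s: "summable (\<lambda>i. (1/2::real)^i * ?H i)"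
    and b: "(\<Sum>i. (1/2::real)^i * ?H i) \<le> 4"
    using tail_bound[of "?H" 2 0 0] H by auto
  show ss: "summable ?F" using s F by simp
  show "dist_a M A T S \<le> 4" unfolding dist_a_eq using b F by simp
  show "0 \<le> dist_a M A T S" unfolding dist_a_eq
    using suminf_nonneg[OF ss aT_inner(4)[OF assms]] by simp
  have "(1/2)^(i+j) * aT M A T S i j \<le> ?F i"
    by (rule suminf_term_le[OF aT_inner(1)[OF assms]]) (use aT_bounds[OF assms] in auto)
  also have "?F i \<le> dist_a M A T S" unfolding dist_a_eq
    by (rule suminf_term_le[OF ss]) (use aT_inner(4)[OF assms] in auto)
  finally show "(1/2)^(i+j) * aT M A T S i j \<le> dist_a M A T S" .
qed



lemma G_facts:
  fixes D :: "'b \<Rightarrow> 'b \<Rightarrow> real" and T S :: "'g \<Rightarrow> 'b"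
  assumes D0: "\<And>x y. 0 \<le> D x y" and D4: "\<And>x y. D x y \<le> 4" and K: "\<forall>i\<in>I. K i \<noteq> {}"
  shows "\<And>i. 0 \<le> (\<lambda>i. if i \<in> I then (SUP g\<in>K i. D (T g) (S g)) else 0) i" "\<And>i. (\<lambda>i. if i \<in> I then (SUP g\<in>K i. D (T g) (S g)) else 0) i \<le> 4"
    "(\<Sum>i. if i \<in> I then (1/2)^i * (SUP g\<in>K i. D (T g) (S g)) else 0) = (\<Sum>i. (1/2::real)^i * (\<lambda>i. if i \<in> I then (SUP g\<in>K i. D (T g) (S g)) else 0) i)"
    "summable (\<lambda>i. (1/2::real)^i * (\<lambda>i. if i \<in> I then (SUP g\<in>K i. D (T g) (S g)) else 0) i)"
    "\<And>i g. i \<in> I \<Longrightarrow> g \<in> K i \<Longrightarrow> D (T g) (S g) \<le> (\<lambda>i. if i \<in> I then (SUP g\<in>K i. D (T g) (S g)) else 0) i"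
proof -
  have bdd: "bdd_above ((\<lambda>g. D (T g) (S g)) ` K i)" for i using D4 by (auto intro!: bdd_aboveI)
  show up: "\<And>i g. i \<in> I \<Longrightarrow> g \<in> K i \<Longrightarrow> D (T g) (S g) \<le> (\<lambda>i. if i \<in> I then (SUP g\<in>K i. D (T g) (S g)) else 0) i"
    using bdd by (auto intro!: cSUP_upper)
  show F0: "\<And>i. 0 \<le> (\<lambda>i. if i \<in> I then (SUP g\<in>K i. D (T g) (S g)) else 0) i"
  proof -
    fix i show "0 \<le> (\<lambda>i. if i \<in> I then (SUP g\<in>K i. D (T g) (S g)) else 0) i"
    proof (cases "i \<in> I")
      case True then obtain g where "g \<in> K i" using K by blast
      then show ?thesis using up[OF True] D0 order_trans by blast
    qed simp
  qed
  show F4: "\<And>i. (\<lambda>i. if i \<in> I then (SUP g\<in>K i. D (T g) (S g)) else 0) i \<le> 4" using K D4 by (auto intro!: cSUP_least)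
  show "(\<Sum>i. if i \<in> I then (1/2)^i * (SUP g\<in>K i. D (T g) (S g)) else 0) = (\<Sum>i. (1/2::real)^i * (\<lambda>i. if i \<in> I then (SUP g\<in>K i. D (T g) (S g)) else 0) i)"
    by (rule arg_cong[where f=suminf]) auto
  show "summable (\<lambda>i. (1/2::real)^i * (\<lambda>i. if i \<in> I then (SUP g\<in>K i. D (T g) (S g)) else 0) i)" using tail_bound(1)[of "(%i. if i \<in> I then (SUP g\<in>K i. D (T g) (S g)) else 0)" 4 0 0] F0 F4 by auto
qed

lemma dist_a_le_dist_d:
  assumes "prob_space M" "inv_mpt M T" "inv_mpt M S" "\<And>i. A i \<in> sets M"
  shows "dist_a M A T S \<le> 2 * dist_d M A T S"
proof -
  interpret prob_space M by fact
  have fm: "finite_measure M" by unfold_locales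
  have aI: "aT M A T S i j \<le> dI M A T S i" for i j
  proof -
    have "aT M A T S i j \<le> measure M ((T ` A i) \<union> (S ` A i) - (T ` A i) \<inter> (S ` A i))"
      unfolding aT_def using int_diff[OF fm img_sets(1)[OF assms(2) assms(4)] img_sets(1)[OF assms(3) assms(4)] assms(4)] .
    then show ?thesis unfolding dI_def by (smt (verit) measure_nonneg)
  qed
  let ?H = "\<lambda>i. \<Sum>j. (1/2::real)^j * aT M A T S i j"
  have "?H i \<le> 2 * dI M A T S i" for i
  proof -
    have "?H i \<le> (\<Sum>j. dI M A T S i * (1/2::real)^j)"
      apply (rule suminf_le)
      using aI tail_bound(1)[of "aT M A T S i" 1 0 0] aT_bounds[OF assms(1)]
      by (auto intro!: mult_left_mono summable_mult simp: mult.commute)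
    also have "\<dots> = dI M A T S i * 2" using suminf_mult[of "\<lambda>j. (1/2::real)^j" "dI M A T S i"]
      suminf_geometric[of "1/2::real"] by simp
    finally show ?thesis by simp
  qed
  have Hn: "0 \<le> ?H i" for i
    using suminf_nonneg[OF tail_bound(1)[of "aT M A T S i" 1 0 0]] aT_bounds[OF assms(1)] by auto
  have Hs: "summable (\<lambda>i. (1/2::real)^i * ?H i)"
    using tail_bound(1)[of "\<lambda>i. ?H i" 2 0 0] Hn tail_bound(2)[of "aT M A T S i" 1 0 0 for i] aT_bounds[OF assms(1)]
    by auto
  have "dist_a M A T S = (\<Sum>i. (1/2)^i * ?H i)" unfolding dist_a_eq using aT_inner(2)[OF assms(1)] by simp
  also have "\<dots> \<le> (\<Sum>i. 2 * ((1/2)^i * dI M A T S i))"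
    apply (rule suminf_le)
    using \<open>\<And>i. ?H i \<le> 2 * dI M A T S i\<close> Hs
    using tail_bound(1)[of "\<lambda>i. ?H i" 2 0 0] tail_bound(1)[of "dI M A T S" 2 0 0] dI_bounds[OF assms(1)]
      tail_bound[of "aT M A T S i" 1 0 0 for i] aT_bounds[OF assms(1)]
    by (auto intro!: summable_mult suminf_nonneg)
  also have "\<dots> = 2 * dist_d M A T S" unfolding dist_d_eq
    using suminf_mult[of "\<lambda>i. (1/2)^i * dI M A T S i" 2] tail_bound(1)[of "dI M A T S" 2 0 0] dI_bounds[OF assms(1)]
    by auto
  finally show ?thesis .
qed



lemma aG_term:
  assumes "prob_space M" "\<And>i. i \<in> I \<Longrightarrow> K i \<noteq> {}" "i \<in> I" "g \<in> K i"
  shows "(1/2)^i * ((1/2)^(k+j) * aT M A (T g) (S g) k j) \<le> dist_aG M A I K T S"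
proof -
  have Kb: "\<forall>i\<in>I. K i \<noteq> {}" using assms(2) by blast
  note G = G_facts[where D="dist_a M A" and I=I and K=K and T=T and S=S, OF dist_a_facts(3)[OF assms(1)] dist_a_facts(2)[OF assms(1)] Kb]
  let ?F = "\<lambda>i. if i \<in> I then (SUP g\<in>K i. dist_a M A (T g) (S g)) else 0"
  have "(1/2)^(k+j) * aT M A (T g) (S g) k j \<le> dist_a M A (T g) (S g)"
    by (rule dist_a_facts(4)[OF assms(1)])
  also have "\<dots> \<le> ?F i" using G(5)[OF assms(3,4)] .
  finally have "(1/2)^i * ((1/2)^(k+j) * aT M A (T g) (S g) k j) \<le> (1/2)^i * ?F i"
    by (intro mult_left_mono) auto
  also have "\<dots> \<le> (\<Sum>i. (1/2)^i * ?F i)"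
    by (rule suminf_term_le[OF G(4)]) (use G(1) in auto)
  also have "\<dots> = dist_aG M A I K T S" unfolding dist_aG_def using G(3) by simp
  finally show ?thesis .
qed

lemma dG_bound:
  assumes "prob_space M" "\<And>i. i \<in> I \<Longrightarrow> K i \<noteq> {}"
    "\<And>i g. i < N \<Longrightarrow> i \<in> I \<Longrightarrow> g \<in> K i \<Longrightarrow> dist_d M A (T g) (S g) \<le> \<eta>" "0 \<le> \<eta>"
  shows "dist_dG M A I K T S \<le> 2*\<eta> + 8*(1/2)^N"
proof -
  have Kb: "\<forall>i\<in>I. K i \<noteq> {}" using assms(2) by blast
  note G = G_facts[where D="dist_d M A" and I=I and K=K and T=T and S=S, OF dist_d_bounds(1)[OF assms(1)] dist_d_bounds(2)[OF assms(1)] Kb]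
  let ?F = "\<lambda>i. if i \<in> I then (SUP g\<in>K i. dist_d M A (T g) (S g)) else 0"
  have "?F i \<le> \<eta>" if "i < N" for i
  proof (cases "i \<in> I")
    case True
    show ?thesis using True by (simp add: cSUP_least assms(2) assms(3)[OF that True])
  qed (simp add: assms(4))
  then have "(\<Sum>i. (1/2)^i * ?F i) \<le> 2*\<eta> + 2*4*(1/2)^N"
    using tail_bound(2)[of ?F 4 N \<eta>] G(1,2) assms(4) by blast
  then show ?thesis unfolding dist_dG_def using G(3) by simp
qed

lemma aG_le_dG:
  assumes "prob_space M" "\<And>i. i \<in> I \<Longrightarrow> K i \<noteq> {}" "\<And>g. inv_mpt M (T g)" "\<And>g. inv_mpt M (S g)"
    "\<And>i. A i \<in> sets M"
  shows "dist_aG M A I K T S \<le> 2 * dist_dG M A I K T S"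
proof -
  have Kb: "\<forall>i\<in>I. K i \<noteq> {}" using assms(2) by blast
  note Ga = G_facts[where D="dist_a M A" and I=I and K=K and T=T and S=S, OF dist_a_facts(3)[OF assms(1)] dist_a_facts(2)[OF assms(1)] Kb]
  note Gd = G_facts[where D="dist_d M A" and I=I and K=K and T=T and S=S, OF dist_d_bounds(1)[OF assms(1)] dist_d_bounds(2)[OF assms(1)] Kb]
  let ?Fa = "\<lambda>i. if i \<in> I then (SUP g\<in>K i. dist_a M A (T g) (S g)) else 0"
  let ?Fd = "\<lambda>i. if i \<in> I then (SUP g\<in>K i. dist_d M A (T g) (S g)) else 0"
  have "?Fa i \<le> 2 * ?Fd i" for i
  proof (cases "i \<in> I")
    case True
    have "dist_a M A (T g) (S g) \<le> 2 * ?Fd i" if "g \<in> K i" for g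
    proof -
      have "dist_a M A (T g) (S g) \<le> 2 * dist_d M A (T g) (S g)" by (rule dist_a_le_dist_d[OF assms(1,3,4,5)])
      moreover have "dist_d M A (T g) (S g) \<le> ?Fd i" by (rule Gd(5)[OF True that])
      ultimately show ?thesis by linarith
    qed
    then show ?thesis using True by (simp add: cSUP_least assms(2))
  qed simp
  then have "(\<Sum>i. (1/2)^i * ?Fa i) \<le> (\<Sum>i. 2 * ((1/2)^i * ?Fd i))"
    using Ga(4) Gd(4) by (intro suminf_le) (auto intro!: summable_mult)
  also have "\<dots> = 2 * (\<Sum>i. (1/2)^i * ?Fd i)" using suminf_mult[OF Gd(4), of 2] by simp
  finally show ?thesis unfolding dist_aG_def dist_dG_def using Ga(3) Gd(3) by simp
qed

lemma cover:
  fixes f :: "nat \<Rightarrow> 'g::topological_space \<Rightarrow> real"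
  assumes "\<And>j. continuous_on UNIV (f j)" "\<And>g. \<exists>j. f j g < \<eta>" "compact K"
  shows "\<exists>m. \<forall>g\<in>K. \<exists>j\<le>m. f j g < \<eta>"
proof -
  have op: "open {g. f j g < \<eta>}" for j
    using open_Collect_less[OF assms(1) continuous_on_const] .
  have cov: "K \<subseteq> (\<Union>j\<in>UNIV. {g. f j g < \<eta>})" using assms(2) by auto
  obtain C where C: "finite C" "K \<subseteq> (\<Union>j\<in>C. {g. f j g < \<eta>})"
    by (rule compactE_image[OF assms(3) op cov]) blast
  then obtain m where "\<forall>j\<in>C. j \<le> m" using finite_nat_set_iff_bounded_le by blast
  then show ?thesis using C by blast
qed

lemma finite_choice_mono:
  assumes "\<And>k. \<exists>m::nat. P k m" "\<And>k m m'. m \<le> m' \<Longrightarrow> P k m \<Longrightarrow> P k m'"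
  shows "\<exists>m. \<forall>k<(N::nat). P k m"
proof (induction N)
  case 0 then show ?case by simp
next
  case (Suc N)
  then obtain m where m: "\<forall>k<N. P k m" by blast
  obtain m' where m': "P N m'" using assms(1) by blast
  have "\<forall>k<Suc N. P k (max m m')"
    using m m' assms(2) by (metis less_Suc_eq max.cobounded1 max.cobounded2)
  then show ?case by blast
qed



lemma action_inv: "is_action M T \<Longrightarrow> inv_mpt M (T g)"
  unfolding is_action_def by blast

lemma action_cont: "is_action M T \<Longrightarrow> B \<in> sets M \<Longrightarrow> C \<in> sets M \<Longrightarrow>
    continuous_on UNIV (\<lambda>g. measure M (T g ` B \<inter> C))"
  unfolding is_action_def by blast

lemma cont_fwd:
  assumes "prob_space M" "is_action M T" "A k \<in> sets M" "A j \<in> sets M"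
  shows "continuous_on UNIV (\<lambda>g. measure M ((A j - T g ` A k) \<union> (T g ` A k - A j)))"
proof -
  interpret prob_space M by fact
  have fm: "finite_measure M" by unfold_locales
  have "measure M ((A j - T g ` A k) \<union> (T g ` A k - A j))
      = measure M (A k) + measure M (A j) - 2 * measure M (T g ` A k \<inter> A j)" for g
  proof -
    have s: "T g ` A k \<in> sets M" "measure M (T g ` A k) = measure M (A k)"
      using img_sets[OF action_inv[OF assms(2)] assms(3)] by auto
    have "(A j - T g ` A k) \<union> (T g ` A k - A j) = T g ` A k \<union> A j - T g ` A k \<inter> A j" by auto
    then show ?thesis using symdiff_meas[OF fm s(1) assms(4)] s(2) by simp
  qed
  moreover have "continuous_on UNIV (\<lambda>g. measure M (A k) + measure M (A j) - 2 * measure M (T g ` A k \<inter> A j))"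
    using action_cont[OF assms(2-4)] by (intro continuous_intros)
  ultimately show ?thesis by simp
qed

lemma cont_bwd:
  assumes "prob_space M" "is_action M T" "A k \<in> sets M" "A j \<in> sets M"
  shows "continuous_on UNIV (\<lambda>g. measure M ((A j - (T g -` A k \<inter> space M)) \<union> ((T g -` A k \<inter> space M) - A j)))"
proof -
  interpret prob_space M by fact
  have fm: "finite_measure M" by unfold_locales
  have "measure M ((A j - (T g -` A k \<inter> space M)) \<union> ((T g -` A k \<inter> space M) - A j))
      = measure M (A k) + measure M (A j) - 2 * measure M (T g ` A j \<inter> A k)" for g
  proof -
    have s: "T g -` A k \<inter> space M \<in> sets M" "measure M (T g -` A k \<inter> space M) = measure M (A k)"
      using pre_sets[OF action_inv[OF assms(2)] assms(3)] by auto
    have "(A j - (T g -` A k \<inter> space M)) \<union> ((T g -` A k \<inter> space M) - A j)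
       = (T g -` A k \<inter> space M) \<union> A j - (T g -` A k \<inter> space M) \<inter> A j" by auto
    then show ?thesis using symdiff_meas[OF fm s(1) assms(4)] s(2)
      pre_int[OF action_inv[OF assms(2)] assms(3,4)] by simp
  qed
  moreover have "continuous_on UNIV (\<lambda>g. measure M (A k) + measure M (A j) - 2 * measure M (T g ` A j \<inter> A k))"
    using action_cont[OF assms(2,4,3)] by (intro continuous_intros)
  ultimately show ?thesis by simp
qed


lemma aT_small:
  fixes x d :: real
  assumes "(1/2)^n * x < d" "n \<le> p" "0 \<le> d"
  shows "x < d * 2^p"
proof -
  have "x = 2^n * ((1/2)^n * x)" by (simp add: mult.assoc[symmetric] power_mult_distrib[symmetric])
  also have "\<dots> < 2^n * d" using assms(1) by simp
  also have "\<dots> \<le> 2^p * d" using assms(2,3) by (intro mult_right_mono power_increasing) auto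
  finally show ?thesis by (simp add: mult.commute)
qed

lemma hard:
  fixes T :: "'g::topological_group_add \<Rightarrow> 'a \<Rightarrow> 'a"
  assumes P: "prob_space M" and As: "\<And>i. A i \<in> sets M"
    and dens: "\<And>B e. B \<in> sets M \<Longrightarrow> e > 0 \<Longrightarrow> \<exists>i. measure M ((A i - B) \<union> (B - A i)) < e"
    and KI: "\<And>i. i \<in> I \<Longrightarrow> compact (K i)" "\<And>i. i \<in> I \<Longrightarrow> K i \<noteq> {}"
    and TA: "is_action M T" and e: "\<epsilon> > 0"
  shows "\<exists>\<delta>>0. \<forall>S. is_action M S \<longrightarrow> dist_aG M A I K T S < \<delta> \<longrightarrow> dist_dG M A I K T S < \<epsilon>"
proof -
  interpret prob_space M by fact
  have fm: "finite_measure M" by unfold_locales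
  obtain N where N: "(1/2::real)^N < \<epsilon>/32" using real_arch_pow_inv[of "\<epsilon>/32" "1/2"] e by auto
  define \<eta> where "\<eta> = \<epsilon>/16"
  have \<eta>0: "\<eta> > 0" using e by (simp add: \<eta>_def)
  define KK where "KK = (\<Union>i\<in>I\<inter>{..<N}. K i)"
  have cKK: "compact KK" unfolding KK_def using KI(1) by (intro compact_UN) auto
  define fw where "fw k j g = measure M ((A j - T g ` A k) \<union> (T g ` A k - A j))" for k j g
  define bw where "bw k j g = measure M ((A j - (T g -` A k \<inter> space M)) \<union> ((T g -` A k \<inter> space M) - A j))" for k j g
  have "\<exists>m. \<forall>k<N. \<forall>g\<in>KK. (\<exists>j\<le>m. fw k j g < \<eta>/16) \<and> (\<exists>j\<le>m. bw k j g < \<eta>/16)"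
  proof (rule finite_choice_mono)
    fix k
    have c1: "continuous_on UNIV (fw k j)" for j unfolding fw_def
      by (rule cont_fwd[where A=A and k=k and j=j, OF P TA As As])
    have d1: "\<exists>j. fw k j g < \<eta>/16" for g unfolding fw_def
      by (rule dens[OF img_sets(1)[OF action_inv[OF TA] As[of k]]]) (use \<eta>0 in simp)
    obtain m1 where m1: "\<forall>g\<in>KK. \<exists>j\<le>m1. fw k j g < \<eta>/16" using cover[OF c1 d1 cKK] by blast
    have c2: "continuous_on UNIV (bw k j)" for j unfolding bw_def
      by (rule cont_bwd[where A=A and k=k and j=j, OF P TA As As])
    have d2: "\<exists>j. bw k j g < \<eta>/16" for g unfolding bw_def
      by (rule dens[OF pre_sets(1)[OF action_inv[OF TA] As[of k]]]) (use \<eta>0 in simp)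
    obtain m2 where m2: "\<forall>g\<in>KK. \<exists>j\<le>m2. bw k j g < \<eta>/16" using cover[OF c2 d2 cKK] by blast
    have "\<forall>g\<in>KK. (\<exists>j\<le>max m1 m2. fw k j g < \<eta>/16) \<and> (\<exists>j\<le>max m1 m2. bw k j g < \<eta>/16)"
      using m1 m2 by (meson le_trans max.cobounded1 max.cobounded2)
    then show "\<exists>m. \<forall>g\<in>KK. (\<exists>j\<le>m. fw k j g < \<eta>/16) \<and> (\<exists>j\<le>m. bw k j g < \<eta>/16)" by blast
  next
    fix k m m' assume "m \<le> (m'::nat)" "\<forall>g\<in>KK. (\<exists>j\<le>m. fw k j g < \<eta>/16) \<and> (\<exists>j\<le>m. bw k j g < \<eta>/16)"
    then show "\<forall>g\<in>KK. (\<exists>j\<le>m'. fw k j g < \<eta>/16) \<and> (\<exists>j\<le>m'. bw k j g < \<eta>/16)"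
      using le_trans by blast
  qed
  then obtain m where m: "\<And>k g. k < N \<Longrightarrow> g \<in> KK \<Longrightarrow> (\<exists>j\<le>m. fw k j g < \<eta>/16) \<and> (\<exists>j\<le>m. bw k j g < \<eta>/16)"
    by blast
  define \<theta> where "\<theta> = \<eta>/8"
  define \<delta> where "\<delta> = \<theta> / 2^(N+N+m)"
  have \<delta>0: "\<delta> > 0" unfolding \<delta>_def \<theta>_def using \<eta>0 by simp
  show ?thesis
  proof (intro exI[of _ \<delta>] conjI allI impI \<delta>0)
    fix S assume SA: "is_action M S" and lt: "dist_aG M A I K T S < \<delta>"
    have small: "aT M A (T g) (S g) k j < \<theta>" if "i < N" "i \<in> I" "g \<in> K i" "k + j \<le> N + m" for i g k j
    proof -
      have "(1/2)^(i+(k+j)) * aT M A (T g) (S g) k j < \<delta>"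
        using aG_term[where K=K and I=I and k=k and j=j and A=A and T=T and S=S, OF P KI(2) that(2,3)] lt by (simp add: power_add mult.assoc)
      moreover have "i + (k+j) \<le> N+N+m" using that(1,4) by simp
      ultimately have "aT M A (T g) (S g) k j < \<delta> * 2^(N+N+m)"
        using \<delta>0 by (intro aT_small) auto
      then show ?thesis unfolding \<delta>_def by simp
    qed
    have dIle: "dI M A (T g) (S g) k \<le> \<eta>" if hy: "i < N" "i \<in> I" "g \<in> K i" "k < N" for i g k
    proof -
      have gK: "g \<in> KK" unfolding KK_def using hy by auto
      obtain j j' where j: "j \<le> m" "fw k j g < \<eta>/16" and j': "j' \<le> m" "bw k j' g < \<eta>/16"
        using m[OF hy(4) gK] by blast
      have T': "inv_mpt M (T g)" and S': "inv_mpt M (S g)" using TA SA by (auto intro: action_inv)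
      have f: "measure M ((T g ` A k) \<union> (S g ` A k) - (T g ` A k) \<inter> (S g ` A k))
          \<le> 4 * fw k j g + 2 * aT M A (T g) (S g) k j"
        unfolding fw_def aT_def
        using core[OF fm img_sets(1)[OF T' As[of k]] img_sets(1)[OF S' As[of k]] As[of j]]
          img_sets(2)[OF T' As[of k]] img_sets(2)[OF S' As[of k]] by simp
      have b: "measure M ((T g -` A k \<inter> space M) \<union> (S g -` A k \<inter> space M)
                 - (T g -` A k \<inter> space M) \<inter> (S g -` A k \<inter> space M))
          \<le> 4 * bw k j' g + 2 * aT M A (T g) (S g) j' k"
        unfolding bw_def aT_def
        using core[OF fm pre_sets(1)[OF T' As[of k]] pre_sets(1)[OF S' As[of k]] As[of j']]
          pre_sets(2)[OF T' As[of k]] pre_sets(2)[OF S' As[of k]]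
          pre_int[OF T' As[of k] As[of j']] pre_int[OF S' As[of k] As[of j']] by simp
      have "aT M A (T g) (S g) k j < \<theta>" using small[OF hy(1-3)] hy(4) j(1) by simp
      moreover have "aT M A (T g) (S g) j' k < \<theta>" using small[OF hy(1-3)] hy(4) j'(1) by simp
      ultimately show ?thesis unfolding dI_def using f b j(2) j'(2) unfolding \<theta>_def by linarith
    qed
    have "dist_d M A (T g) (S g) \<le> 2*\<eta> + 4*(1/2)^N" if "i < N" "i \<in> I" "g \<in> K i" for i g
      using dist_d_bound[OF P, of N A "T g" "S g" \<eta>] dIle[OF that] \<eta>0 by auto
    then have "dist_dG M A I K T S \<le> 2*(2*\<eta> + 4*(1/2)^N) + 8*(1/2)^N"
      using dG_bound[where K=K and I=I and N=N and A=A and T=T and S=S and \<eta>="2*\<eta> + 4*(1/2)^N", OF P KI(2)] \<eta>0 by auto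
    also have "\<dots> < \<epsilon>" using N e unfolding \<eta>_def by simp
    finally show "dist_dG M A I K T S < \<epsilon>" .
  qed
qed


theorem mainTheorem8:
  fixes M :: "'a measure" and A :: "nat \<Rightarrow> 'a set"
    and I :: "nat set" and K :: "nat \<Rightarrow> 'g::{topological_group_add, t2_space, first_countable_topology} set"
  assumes "nonatomic_lebesgue_space M"
    and "\<And>i. A i \<in> sets M"
    and "\<And>B. B \<in> sets M \<Longrightarrow> \<exists>C \<in> sigma_sets (space M) (range A). (B - C) \<union> (C - B) \<in> null_sets M"
    and "\<And>B e. B \<in> sets M \<Longrightarrow> e > 0 \<Longrightarrow> \<exists>i. measure M ((A i - B) \<union> (B - A i)) < e"
    and "locally_compact_space (euclidean :: 'g topology)"
    and "\<And>i. i \<in> I \<Longrightarrow> compact (K i) \<and> interior (K i) \<noteq> {}"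
    and "\<exists>S \<subseteq> (\<Union>i\<in>I. K i). generated_subgroup S = UNIV"
  shows "pm_open {T. is_action M T} (dist_aG M A I K) U
           \<longleftrightarrow> pm_open {T. is_action M T} (dist_dG M A I K) U"
proof -
  have P: "prob_space M" using assms(1) unfolding nonatomic_lebesgue_space_def by blast
  have KI1: "\<And>i. i \<in> I \<Longrightarrow> compact (K i)" using assms(6) by blast
  have KI2: "\<And>i. i \<in> I \<Longrightarrow> K i \<noteq> {}" using assms(6) interior_subset by blast
  have easy: "\<exists>d>0. \<forall>S\<in>{T. is_action M T}. dist_dG M A I K T S < d \<longrightarrow> dist_aG M A I K T S < e"
    if "T \<in> {T. is_action M T}" "e > 0" for T e
  proof (intro exI[of _ "e/2"] conjI ballI impI)
    show "e/2 > 0" using that by simp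
    fix S assume "S \<in> {T. is_action M T}" "dist_dG M A I K T S < e/2"
    moreover have "dist_aG M A I K T S \<le> 2 * dist_dG M A I K T S"
      using that(1) \<open>S \<in> _\<close>
      by (intro aG_le_dG[where K=K and I=I, OF P KI2 _ _ assms(2)]) (auto intro: action_inv)
    ultimately show "dist_aG M A I K T S < e" by simp
  qed
  have hard': "\<exists>d>0. \<forall>S\<in>{T. is_action M T}. dist_aG M A I K T S < d \<longrightarrow> dist_dG M A I K T S < e"
    if "T \<in> {T. is_action M T}" "e > 0" for T e
    using hard[where K=K and I=I, OF P assms(2) assms(4) KI1 KI2, of T e] that by auto
  show ?thesis
  proof
    assume o: "pm_open {T. is_action M T} (dist_aG M A I K) U"
    show "pm_open {T. is_action M T} (dist_dG M A I K) U" unfolding pm_open_def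
    proof (intro conjI ballI)
      show "U \<subseteq> {T. is_action M T}" using o unfolding pm_open_def by blast
      fix x assume x: "x \<in> U"
      then obtain e where e: "e > 0" "\<forall>y\<in>{T. is_action M T}. dist_aG M A I K x y < e \<longrightarrow> y \<in> U"
        using o unfolding pm_open_def by blast
      obtain d where "d > 0" "\<forall>S\<in>{T. is_action M T}. dist_dG M A I K x S < d \<longrightarrow> dist_aG M A I K x S < e"
        using easy[of x e] x e o unfolding pm_open_def by blast
      then show "\<exists>e>0. \<forall>y\<in>{T. is_action M T}. dist_dG M A I K x y < e \<longrightarrow> y \<in> U"
        using e by blast
    qed
  next
    assume o: "pm_open {T. is_action M T} (dist_dG M A I K) U"
    show "pm_open {T. is_action M T} (dist_aG M A I K) U" unfolding pm_open_def
    proof (intro conjI ballI)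
      show "U \<subseteq> {T. is_action M T}" using o unfolding pm_open_def by blast
      fix x assume x: "x \<in> U"
      then obtain e where e: "e > 0" "\<forall>y\<in>{T. is_action M T}. dist_dG M A I K x y < e \<longrightarrow> y \<in> U"
        using o unfolding pm_open_def by blast
      obtain d where "d > 0" "\<forall>S\<in>{T. is_action M T}. dist_aG M A I K x S < d \<longrightarrow> dist_dG M A I K x S < e"
        using hard'[of x e] x e o unfolding pm_open_def by blast
      then show "\<exists>e>0. \<forall>y\<in>{T. is_action M T}. dist_aG M A I K x y < e \<longrightarrow> y \<in> U"
        using e by blast
    qed
  qed
qed

end
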